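(* Let $K\ge 1$ and $1\le K^{*}\le K$ be integers. Let $\alpha_1,\dots,\alpha_K$ be independent random variables with $\alpha_k\sim\mathrm{Bernoulli}(p_k)$, $p_k\in(0,1)$ for $k=1,\dots,K$, and write $\boldsymbol{\alpha}=(\alpha_1,\dots,\alpha_K)$. Let $R\in\{0,1\}$ be a response generated from the DINA model for an item whose required attributes are exactly the first $K^{*}$ attributes (i.e. its $Q$-matrix row is $\mathbf{q}=(1,\dots,1,0,\dots,0)$ with $K^{*}$ ones): that is, with ideal response $\xi=\prod_{k=1}^{K^{*}}\alpha_k$, $$P(R=1\mid\boldsymbol{\alpha})=\begin{cases}1-s,&\xi=1,\\ g,&\xi=0,\end{cases}$$ where the slipping parameter $s$ and guessing parameter $g$ satisfy $1-s>g$. Then the mis-specified linear additive model of $R$ regressed on $(\alpha_1,\dots,\alpha_K)$ has mean function $\mathbb{E}^{*}[R\mid\boldsymbol{\alpha}]=\beta_0+\beta_1\alpha_1+\dots+\beta_K\alpha_K$ with $\beta_l\neq 0$ for $l=1,\dots,K^{*}$ and $\beta_k=0$ for $k=K^{*}+1,\dots,K$.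
   Context: The mis-specified linear additive model's mean function $\mathbb{E}^{*}[R\mid\boldsymbol{\alpha}]$ denotes the population linear regression (least squares) mean function of $R$ on $\alpha_1,\dots,\alpha_K$ with an intercept, i.e. $\beta_0+\sum_{k=1}^K\beta_k\alpha_k$ where $(\beta_0,\dots,\beta_K)$ minimize $\mathbb{E}\big[(R-\beta_0-\sum_{k=1}^K\beta_k\alpha_k)^2\big]$ under the joint distribution of $(\boldsymbol{\alpha},R)$ described. *)

theory Defs
  imports Complex_Main "HOL-Library.FuncSet"
begin

definition attr_space :: "nat \<Rightarrow> (nat \<Rightarrow> real) set" where
  "attr_space K = ({1..K} \<rightarrow>\<^sub>E {0, 1})"

definition attr_prob :: "(nat \<Rightarrow> real) \<Rightarrow> nat \<Rightarrow> (nat \<Rightarrow> real) \<Rightarrow> real" where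
  "attr_prob p K a = (\<Prod>k\<in>{1..K}. if a k = 1 then p k else 1 - p k)"

text \<open>DINA model: P(R = 1 | alpha) for the item with q = (1,...,1,0,...,0), Ks ones.\<close>
definition dina_mean :: "nat \<Rightarrow> real \<Rightarrow> real \<Rightarrow> (nat \<Rightarrow> real) \<Rightarrow> real" where
  "dina_mean Ks s g a = (if (\<Prod>k\<in>{1..Ks}. a k) = 1 then 1 - s else g)"

definition lin_pred :: "nat \<Rightarrow> (nat \<Rightarrow> real) \<Rightarrow> (nat \<Rightarrow> real) \<Rightarrow> real" where
  "lin_pred K \<beta> a = \<beta> 0 + (\<Sum>k=1..K. \<beta> k * a k)"

text \<open>Population squared loss E[(R - beta_0 - sum_k beta_k alpha_k)^2] under the joint
  law of (alpha, R), where R | alpha ~ Bernoulli(dina_mean).\<close>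
definition ls_risk :: "nat \<Rightarrow> nat \<Rightarrow> (nat \<Rightarrow> real) \<Rightarrow> real \<Rightarrow> real \<Rightarrow> (nat \<Rightarrow> real) \<Rightarrow> real" where
  "ls_risk K Ks p s g \<beta> =
     (\<Sum>a\<in>attr_space K. attr_prob p K a *
        (dina_mean Ks s g a * (1 - lin_pred K \<beta> a)^2
         + (1 - dina_mean Ks s g a) * (0 - lin_pred K \<beta> a)^2))"

definition is_pop_ls :: "nat \<Rightarrow> nat \<Rightarrow> (nat \<Rightarrow> real) \<Rightarrow> real \<Rightarrow> real \<Rightarrow> (nat \<Rightarrow> real) \<Rightarrow> bool" where
  "is_pop_ls K Ks p s g \<beta> = (\<forall>\<gamma>. ls_risk K Ks p s g \<beta> \<le> ls_risk K Ks p s g \<gamma>)"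

end

theory Submission
  imports Defs
begin

definition Ex :: "nat \<Rightarrow> (nat \<Rightarrow> real) \<Rightarrow> ((nat \<Rightarrow> real) \<Rightarrow> real) \<Rightarrow> real" where
  "Ex K p f = (\<Sum>a\<in>attr_space K. attr_prob p K a * f a)"

lemma finite_S: "finite (attr_space K)"
  unfolding attr_space_def by (intro finite_PiE) auto

lemma Ex_add: "Ex K p (\<lambda>a. u a + v a) = Ex K p u + Ex K p v"
  unfolding Ex_def by (simp add: distrib_left sum.distrib)

lemma Ex_diff: "Ex K p (\<lambda>a. u a - v a) = Ex K p u - Ex K p v"
  unfolding Ex_def by (simp add: right_diff_distrib sum_subtractf)

lemma Ex_cmult: "Ex K p (\<lambda>a. c * u a) = c * Ex K p u"
  unfolding Ex_def by (simp add: sum_distrib_left mult_ac)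

lemma Ex_sum: "Ex K p (\<lambda>a. \<Sum>k\<in>I. u k a) = (\<Sum>k\<in>I. Ex K p (u k))"
  unfolding Ex_def by (simp add: sum_distrib_left sum.swap[of _ I])

lemma Ex_cong: "(\<And>a. a \<in> attr_space K \<Longrightarrow> u a = v a) \<Longrightarrow> Ex K p u = Ex K p v"
  unfolding Ex_def by (intro sum.cong) auto

lemma Ex_prod:
  "Ex K p (\<lambda>a. \<Prod>i\<in>{1..K}. c i (a i)) = (\<Prod>i\<in>{1..K}. (1 - p i) * c i 0 + p i * c i 1)"
proof -
  have "Ex K p (\<lambda>a. \<Prod>i\<in>{1..K}. c i (a i))
      = (\<Sum>a\<in>attr_space K. \<Prod>i\<in>{1..K}. (if a i = 1 then p i else 1 - p i) * c i (a i))"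
    unfolding Ex_def attr_prob_def by (simp add: prod.distrib)
  also have "\<dots> = (\<Prod>i\<in>{1..K}. \<Sum>y\<in>{0,1}. (if y = 1 then p i else 1 - p i) * c i y)"
    unfolding attr_space_def by (subst prod_sum_PiE) auto
  also have "\<dots> = (\<Prod>i\<in>{1..K}. (1 - p i) * c i 0 + p i * c i 1)"
    by simp
  finally show ?thesis .
qed

lemma Ex_one: "Ex K p (\<lambda>a. 1) = 1"
  using Ex_prod[of K p "\<lambda>i x. 1"] by simp

lemma Ex_single:
  assumes "j \<in> {1..K}"
  shows "Ex K p (\<lambda>a. a j) = p j"
proof -
  have "Ex K p (\<lambda>a. a j) = Ex K p (\<lambda>a. \<Prod>i\<in>{1..K}. (\<lambda>i x. if i = j then x else 1) i (a i))"
    using assms by (simp add: prod.delta)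
  also have "\<dots> = (\<Prod>i\<in>{1..K}. if i = j then p i else 1)"
    by (rule trans[OF Ex_prod[of K p "\<lambda>i x. if i = j then x else 1"]]) (intro prod.cong, auto)
  also have "\<dots> = p j" using assms by (simp add: prod.delta)
  finally show ?thesis .
qed

lemma Ex_pair:
  assumes "j \<in> {1..K}" "k \<in> {1..K}" "j \<noteq> k"
  shows "Ex K p (\<lambda>a. a j * a k) = p j * p k"
proof -
  have "Ex K p (\<lambda>a. a j * a k) = Ex K p (\<lambda>a. \<Prod>i\<in>{1..K}. (\<lambda>i x. (if i = j then x else 1) * (if i = k then x else 1)) i (a i))"
  proof (rule Ex_cong)
    fix a :: "nat \<Rightarrow> real"
    show "a j * a k = (\<Prod>i\<in>{1..K}. (\<lambda>i x. (if i = j then x else 1) * (if i = k then x else 1)) i (a i))"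
      using assms by (simp only: prod.distrib prod.delta finite_atLeastAtMost) simp
  qed
  also have "\<dots> = (\<Prod>i\<in>{1..K}. (if i = j then p i else 1) * (if i = k then p i else 1))"
    by (rule trans[OF Ex_prod[of K p "\<lambda>i x. (if i = j then x else 1) * (if i = k then x else 1)"]]) (intro prod.cong, auto simp: assms)
  also have "\<dots> = p j * p k" using assms by (simp add: prod.distrib prod.delta)
  finally show ?thesis .
qed

lemma xi_eq:
  fixes K Ks :: nat
  assumes "Ks \<le> K"
  shows "(\<Prod>i\<in>{1..Ks}. a i) = (\<Prod>i\<in>{1..K}. if i \<le> Ks then a i else 1)"
proof -
  have "{x\<in>{1..K}. x \<le> Ks} = {1..Ks}" using assms by force
  then show ?thesis using prod.inter_filter[of "{1..K}" a "\<lambda>i. i \<le> Ks"] by simp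
qed

lemma Ex_xi:
  assumes "Ks \<le> K"
  shows "Ex K p (\<lambda>a. \<Prod>i\<in>{1..Ks}. a i) = (\<Prod>i\<in>{1..Ks}. p i)"
proof -
  have "Ex K p (\<lambda>a. \<Prod>i\<in>{1..Ks}. a i) = Ex K p (\<lambda>a. \<Prod>i\<in>{1..K}. (\<lambda>i x. if i \<le> Ks then x else 1) i (a i))"
    unfolding xi_eq[OF assms] by simp
  also have "\<dots> = (\<Prod>i\<in>{1..K}. if i \<le> Ks then p i else 1)"
    by (rule trans[OF Ex_prod[of K p "\<lambda>i x. if i \<le> Ks then x else 1"]]) (intro prod.cong, auto)
  also have "\<dots> = (\<Prod>i\<in>{1..Ks}. p i)" using xi_eq[OF assms, of p] by simp
  finally show ?thesis .
qed

lemma Ex_xi_single: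
  assumes "Ks \<le> K" "j \<in> {1..K}"
  shows "Ex K p (\<lambda>a. a j * (\<Prod>i\<in>{1..Ks}. a i)) = (\<Prod>i\<in>{1..Ks}. p i) * (if j \<le> Ks then 1 else p j)"
proof -
  have "Ex K p (\<lambda>a. a j * (\<Prod>i\<in>{1..Ks}. a i)) = Ex K p (\<lambda>a. \<Prod>i\<in>{1..K}. (\<lambda>i x. (if i \<le> Ks then x else 1) * (if i = j then x else 1)) i (a i))"
    unfolding xi_eq[OF assms(1)] using assms(2) by (simp add: prod.distrib prod.delta mult_ac)
  also have "\<dots> = (\<Prod>i\<in>{1..K}. (if i \<le> Ks then p i else 1) * (if i = j then (if j \<le> Ks then 1 else p j) else 1))"
    by (rule trans[OF Ex_prod[of K p "\<lambda>i x. (if i \<le> Ks then x else 1) * (if i = j then x else 1)"]]) (intro prod.cong, auto)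
  also have "\<dots> = (\<Prod>i\<in>{1..Ks}. p i) * (if j \<le> Ks then 1 else p j)"
    unfolding prod.distrib xi_eq[OF assms(1), of p, symmetric] using assms(2) by (simp add: prod.delta)
  finally show ?thesis .
qed


lemma Ex_const: "Ex K p (\<lambda>a. c) = c"
  using Ex_cmult[of K p c "\<lambda>a. 1"] Ex_one[of K p] by simp

lemma S_mem: "a \<in> attr_space K \<Longrightarrow> i \<in> {1..K} \<Longrightarrow> a i = 0 \<or> a i = 1"
  unfolding attr_space_def by (auto simp: PiE_iff)

lemma w_pos:
  assumes "\<forall>k\<in>{1..K}. 0 < p k \<and> p k < 1"
  shows "attr_prob p K a > 0"
  unfolding attr_prob_def using assms by (intro prod_pos) auto

lemma Ex_zero:
  assumes "\<forall>k\<in>{1..K}. 0 < p k \<and> p k < 1"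
    and "\<And>a. f a \<ge> 0" and "Ex K p f \<le> 0" and "a \<in> attr_space K"
  shows "f a = 0"
proof -
  have nn: "\<forall>a\<in>attr_space K. 0 \<le> attr_prob p K a * f a"
    using w_pos[OF assms(1)] assms(2) by (simp add: less_imp_le)
  then have "Ex K p f \<ge> 0" unfolding Ex_def by (intro sum_nonneg) auto
  then have "Ex K p f = 0" using assms(3) by simp
  then have "\<forall>a\<in>attr_space K. attr_prob p K a * f a = 0"
    using sum_nonneg_eq_0_iff[OF finite_S, where f="\<lambda>a. attr_prob p K a * f a"] nn
    unfolding Ex_def by blast
  then show ?thesis using assms(4) w_pos[OF assms(1), of a] by force
qed

lemma dina_eq:
  fixes K Ks :: nat
  assumes "a \<in> attr_space K" "Ks \<le> K"
  shows "dina_mean Ks s g a = g + (1 - s - g) * (\<Prod>i\<in>{1..Ks}. a i)"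
proof (cases "\<forall>i\<in>{1..Ks}. a i = 1")
  case True
  then have "(\<Prod>i\<in>{1..Ks}. a i) = 1" by simp
  then show ?thesis unfolding dina_mean_def by simp
next
  case False
  then obtain i where i: "i \<in> {1..Ks}" "a i \<noteq> 1" by blast
  then have "a i = 0" using S_mem[OF assms(1), of i] assms(2) by auto
  then have "(\<Prod>i\<in>{1..Ks}. a i) = 0" using i by (intro prod_zero) auto
  then show ?thesis unfolding dina_mean_def by simp
qed

lemma lin_diff:
  "lin_pred K \<gamma> a - lin_pred K \<beta> a = (\<gamma> 0 - \<beta> 0) + (\<Sum>k=1..K. (\<gamma> k - \<beta> k) * a k)"
  unfolding lin_pred_def by (simp add: sum_subtractf left_diff_distrib)

theorem proposition1:
  fixes K Ks :: nat and p :: "nat \<Rightarrow> real" and s g :: real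
  assumes "1 \<le> K" and "1 \<le> Ks" and "Ks \<le> K"
    and "\<forall>k\<in>{1..K}. 0 < p k \<and> p k < 1"
    and "0 \<le> s" and "s \<le> 1" and "0 \<le> g" and "g \<le> 1"
    and "g < 1 - s"
  shows "(\<exists>\<beta>. is_pop_ls K Ks p s g \<beta>) \<and>
         (\<forall>\<beta>. is_pop_ls K Ks p s g \<beta> \<longrightarrow>
              (\<forall>l\<in>{1..Ks}. \<beta> l \<noteq> 0) \<and> (\<forall>k\<in>{Ks<..K}. \<beta> k = 0))"
proof -
  note pp = assms(4)
  define c where "c = 1 - s - g"
  define P where "P = (\<Prod>i\<in>{1..Ks}. p i)"
  define xi where "xi a = (\<Prod>i\<in>{1..Ks}. a i)" for a :: "nat \<Rightarrow> real"
  have cpos: "c > 0" using assms(9) unfolding c_def by simp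
  have Ppos: "P > 0" unfolding P_def using pp assms(3) by (intro prod_pos) auto
  have pnz: "p k \<noteq> 0" if "k \<in> {1..Ks}" for k using pp that assms(3) by force
  define bs where "bs k = (if k = 0 then g + c*P - real Ks * (c*P) else if k \<le> Ks then c*P/p k else 0)" for k
  define m where "m a = dina_mean Ks s g a" for a
  define r where "r a = lin_pred K bs a - m a" for a
  have split: "{1..K} = {1..Ks} \<union> {Ks<..K}" using assms(3) by auto
  have Lstar: "lin_pred K bs a = g + c*P + (\<Sum>k\<in>{1..Ks}. (c*P/p k) * (a k - p k))" for a
  proof -
    have "(\<Sum>k=1..K. bs k * a k) = (\<Sum>k\<in>{1..Ks}. bs k * a k) + (\<Sum>k\<in>{Ks<..K}. bs k * a k)"
      unfolding split by (rule sum.union_disjoint) auto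
    also have "(\<Sum>k\<in>{Ks<..K}. bs k * a k) = 0" unfolding bs_def by (intro sum.neutral) auto
    also have "(\<Sum>k\<in>{1..Ks}. bs k * a k) = (\<Sum>k\<in>{1..Ks}. (c*P/p k) * (a k - p k) + c*P)"
      unfolding bs_def using pnz by (intro sum.cong) (auto simp: field_simps)
    also have "\<dots> = (\<Sum>k\<in>{1..Ks}. (c*P/p k) * (a k - p k)) + real Ks * (c*P)"
      by (simp add: sum.distrib)
    finally show ?thesis unfolding lin_pred_def bs_def by simp
  qed
  have r_eq: "r a = c*P + (\<Sum>k\<in>{1..Ks}. (c*P/p k) * (a k - p k)) - c * xi a"
    if "a \<in> attr_space K" for a
    unfolding r_def m_def Lstar dina_eq[OF that assms(3)] xi_def c_def by simp
  have Exi: "Ex K p xi = P" unfolding xi_def P_def using Ex_xi[OF assms(3)] .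
  have E_r: "Ex K p r = 0"
  proof -
    have "Ex K p r = Ex K p (\<lambda>a. c*P + (\<Sum>k\<in>{1..Ks}. (c*P/p k) * (a k - p k)) - c * xi a)"
      by (rule Ex_cong) (simp add: r_eq)
    also have "\<dots> = c*P + (\<Sum>k\<in>{1..Ks}. (c*P/p k) * (Ex K p (\<lambda>a. a k) - p k)) - c * P"
      by (simp only: Ex_add Ex_diff Ex_cmult Ex_sum Ex_const Exi)
    also have "(\<Sum>k\<in>{1..Ks}. (c*P/p k) * (Ex K p (\<lambda>a. a k) - p k)) = 0"
      using assms(3) by (intro sum.neutral) (auto simp: Ex_single)
    finally show ?thesis by simp
  qed
  have E_rj: "Ex K p (\<lambda>a. a j * r a) = 0" if j: "j \<in> {1..K}" for j
  proof -
    have "Ex K p (\<lambda>a. a j * r a) = Ex K p (\<lambda>a. c*P * a j + (\<Sum>k\<in>{1..Ks}. (c*P/p k) * (a j * a k - p k * a j)) - c * (a j * xi a))"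
    proof (rule Ex_cong)
      fix a assume aS: "a \<in> attr_space K"
      have H: "\<And>x q y z::real. x * (q * (y - z)) = q * (x*y - z*x)" by (simp add: algebra_simps)
      have "a j * (\<Sum>k\<in>{1..Ks}. (c*P/p k) * (a k - p k)) = (\<Sum>k\<in>{1..Ks}. (c*P/p k) * (a j * a k - p k * a j))"
        unfolding sum_distrib_left H ..
      then show "a j * r a = c*P * a j + (\<Sum>k\<in>{1..Ks}. (c*P/p k) * (a j * a k - p k * a j)) - c * (a j * xi a)"
        unfolding r_eq[OF aS] by (simp only: right_diff_distrib distrib_left mult_ac)
    qed
    also have "\<dots> = c*P * p j + (\<Sum>k\<in>{1..Ks}. (c*P/p k) * (Ex K p (\<lambda>a. a j * a k) - p k * p j)) - c * (P * (if j \<le> Ks then 1 else p j))"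
      using Ex_xi_single[OF assms(3) j, of p] j
      by (simp only: Ex_add Ex_diff Ex_cmult Ex_sum Ex_const Ex_single xi_def P_def)
    also have "(\<Sum>k\<in>{1..Ks}. (c*P/p k) * (Ex K p (\<lambda>a. a j * a k) - p k * p j))
        = (\<Sum>k\<in>{1..Ks}. if k = j then c*P*(1 - p j) else 0)"
    proof (rule sum.cong)
      fix k assume k: "k \<in> {1..Ks}"
      show "(c*P/p k) * (Ex K p (\<lambda>a. a j * a k) - p k * p j) = (if k = j then c*P*(1 - p j) else 0)"
      proof (cases "k = j")
        case True
        have "Ex K p (\<lambda>a. a j * a j) = Ex K p (\<lambda>a. a j)"
          by (rule Ex_cong) (use S_mem j in force)
        then show ?thesis using True Ex_single[OF j] pnz[OF k]
          by (simp add: field_simps power2_eq_square)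
      next
        case False
        then show ?thesis using Ex_pair[OF j _ , of k p] k assms(3) by auto
      qed
    qed simp
    also have "\<dots> = (if j \<le> Ks then c*P*(1 - p j) else 0)"
      using j by (simp add: sum.delta)
    finally show ?thesis by (cases "j \<le> Ks") (simp_all add: algebra_simps)
  qed
  have decomp: "ls_risk K Ks p s g \<gamma> = ls_risk K Ks p s g bs + Ex K p (\<lambda>a. (lin_pred K \<gamma> a - lin_pred K bs a)^2)" for \<gamma>
  proof -
    define D where "D a = lin_pred K \<gamma> a - lin_pred K bs a" for a
    have gen: "ls_risk K Ks p s g \<delta> = Ex K p (\<lambda>a. m a * (1 - m a)) + Ex K p (\<lambda>a. (lin_pred K \<delta> a - lin_pred K bs a)^2)
         + 2 * Ex K p (\<lambda>a. (lin_pred K \<delta> a - lin_pred K bs a) * r a) + Ex K p (\<lambda>a. (r a)^2)" for \<delta>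
    proof -
      have "ls_risk K Ks p s g \<delta> = Ex K p (\<lambda>a. m a * (1 - m a) + (lin_pred K \<delta> a - lin_pred K bs a)^2
         + 2 * ((lin_pred K \<delta> a - lin_pred K bs a) * r a) + (r a)^2)"
        unfolding ls_risk_def Ex_def m_def r_def by (intro sum.cong) (auto simp: algebra_simps power2_eq_square)
      then show ?thesis by (simp only: Ex_add Ex_cmult)
    qed
    have cross: "Ex K p (\<lambda>a. D a * r a) = 0"
    proof -
      have "Ex K p (\<lambda>a. D a * r a) = Ex K p (\<lambda>a. (\<gamma> 0 - bs 0) * r a + (\<Sum>k=1..K. (\<gamma> k - bs k) * (a k * r a)))"
        unfolding D_def lin_diff by (rule Ex_cong) (simp add: algebra_simps sum_distrib_left sum_distrib_right)
      also have "\<dots> = (\<gamma> 0 - bs 0) * Ex K p r + (\<Sum>k=1..K. (\<gamma> k - bs k) * Ex K p (\<lambda>a. a k * r a))"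
        by (simp only: Ex_add Ex_cmult Ex_sum)
      also have "\<dots> = 0" using E_r E_rj by simp
      finally show ?thesis .
    qed
    show ?thesis using gen[of \<gamma>] gen[of bs] cross Ex_const[of K p 0] unfolding D_def by simp
  qed
  have Ex_sq_nn: "Ex K p (\<lambda>a. (f a)^2) \<ge> 0" for f
    unfolding Ex_def using w_pos[OF pp] by (intro sum_nonneg) (simp add: less_imp_le)
  have ex: "is_pop_ls K Ks p s g bs"
    unfolding is_pop_ls_def using decomp Ex_sq_nn by (metis le_add_same_cancel1)
  have uniq: "\<beta> k = bs k" if b: "is_pop_ls K Ks p s g \<beta>" and k: "k \<in> {0..K}" for \<beta> k
  proof -
    have "ls_risk K Ks p s g \<beta> \<le> ls_risk K Ks p s g bs" using b unfolding is_pop_ls_def by blast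
    then have le: "Ex K p (\<lambda>a. (lin_pred K \<beta> a - lin_pred K bs a)^2) \<le> 0" using decomp[of \<beta>] by simp
    have eqL: "lin_pred K \<beta> a = lin_pred K bs a" if "a \<in> attr_space K" for a
      using Ex_zero[OF pp _ le that] by simp
    define a0 where "a0 = restrict (\<lambda>_. 0::real) {1..K}"
    have a0S: "a0 \<in> attr_space K" unfolding a0_def attr_space_def by auto
    have L0: "lin_pred K \<delta> a0 = \<delta> 0" for \<delta> unfolding lin_pred_def a0_def by simp
    have b0: "\<beta> 0 = bs 0" using eqL[OF a0S] L0 by simp
    show ?thesis
    proof (cases "k = 0")
      case True then show ?thesis using b0 by simp
    next
      case False
      then have k1: "k \<in> {1..K}" using k by auto
      define e where "e = restrict (\<lambda>i. if i = k then 1 else 0::real) {1..K}"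
      have eS: "e \<in> attr_space K" unfolding e_def attr_space_def by auto
      have Le: "lin_pred K \<delta> e = \<delta> 0 + \<delta> k" for \<delta>
      proof -
        have "(\<Sum>i=1..K. \<delta> i * e i) = (\<Sum>i=1..K. if i = k then \<delta> i else 0)"
          unfolding e_def by (intro sum.cong) auto
        then show ?thesis unfolding lin_pred_def using k1 by (simp add: sum.delta)
      qed
      show ?thesis using eqL[OF eS] Le b0 by simp
    qed
  qed
  show ?thesis
  proof (intro conjI allI impI)
    show "\<exists>\<beta>. is_pop_ls K Ks p s g \<beta>" using ex by blast
  next
    fix \<beta> assume b: "is_pop_ls K Ks p s g \<beta>"
    show "\<forall>l\<in>{1..Ks}. \<beta> l \<noteq> 0"
    proof
      fix l assume l: "l \<in> {1..Ks}"
      have "\<beta> l = c*P/p l" using uniq[OF b, of l] l assms(3) unfolding bs_def by auto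
      then show "\<beta> l \<noteq> 0" using cpos Ppos pnz[OF l] by simp
    qed
    show "\<forall>k\<in>{Ks<..K}. \<beta> k = 0"
      using uniq[OF b] unfolding bs_def by auto
  qed
qed

end
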